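(* Let $Q$ be an automorphic loop and for $x\in Q$ define $P_x=R_x^{-1}L_{x^{-1}}$ (equivalently $P_x=R_x^{-1}R_x^J$, where $R_x^J=J^{-1}R_xJ$ and $J$ is inversion). Then for all $a,b\in Q$ we have $P_aP_bP_a=P_c$ where $c=b\,L_{a^{-1}}^{-1}R_a$. Moreover, $P_a^n=P_{a^n}$ for all $a\in Q$ and all integers $n$.
   Context: A loop is a set with a binary operation in which left and right division are uniquely solvable and which has a neutral element $1$. $R_a:x\mapsto xa$, $L_a:x\mapsto ax$; $\mathrm{Mlt}(Q)=\langle R_x,L_x\mid x\in Q\rangle$; $\mathrm{Inn}(Q)$ is the stabilizer of $1$ in $\mathrm{Mlt}(Q)$. $Q$ is automorphic if $\mathrm{Inn}(Q)\le\mathrm{Aut}(Q)$. Automorphic loops are power-associative (each element generates a cyclic group), so $x^{-1}$ and $a^n$ are well defined; $J:x\mapsto x^{-1}$. Maps act on the right and are composed left to right: $x(fg)=(xf)g$, and $xf$ denotes the image of $x$ under $f$. *)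

theory Defs
  imports Main
begin

definition loop :: "('a \<Rightarrow> 'a \<Rightarrow> 'a) \<Rightarrow> 'a \<Rightarrow> bool" where
  "loop m e \<longleftrightarrow>
     (\<forall>a b. \<exists>!x. m a x = b) \<and> (\<forall>a b. \<exists>!y. m y a = b) \<and>
     (\<forall>x. m e x = x \<and> m x e = x)"

definition Rt :: "('a \<Rightarrow> 'a \<Rightarrow> 'a) \<Rightarrow> 'a \<Rightarrow> 'a \<Rightarrow> 'a" where
  "Rt m a = (\<lambda>x. m x a)"

definition Lt :: "('a \<Rightarrow> 'a \<Rightarrow> 'a) \<Rightarrow> 'a \<Rightarrow> 'a \<Rightarrow> 'a" where
  "Lt m a = (\<lambda>x. m a x)"

inductive_set Mlt :: "('a \<Rightarrow> 'a \<Rightarrow> 'a) \<Rightarrow> ('a \<Rightarrow> 'a) set" for m where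
  Mlt_id: "id \<in> Mlt m"
| Mlt_R: "f \<in> Mlt m \<Longrightarrow> Rt m x \<circ> f \<in> Mlt m"
| Mlt_Rinv: "f \<in> Mlt m \<Longrightarrow> inv (Rt m x) \<circ> f \<in> Mlt m"
| Mlt_L: "f \<in> Mlt m \<Longrightarrow> Lt m x \<circ> f \<in> Mlt m"
| Mlt_Linv: "f \<in> Mlt m \<Longrightarrow> inv (Lt m x) \<circ> f \<in> Mlt m"

definition Inn :: "('a \<Rightarrow> 'a \<Rightarrow> 'a) \<Rightarrow> 'a \<Rightarrow> ('a \<Rightarrow> 'a) set" where
  "Inn m e = {f \<in> Mlt m. f e = e}"

definition is_aut :: "('a \<Rightarrow> 'a \<Rightarrow> 'a) \<Rightarrow> ('a \<Rightarrow> 'a) \<Rightarrow> bool" where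
  "is_aut m f \<longleftrightarrow> bij f \<and> (\<forall>x y. f (m x y) = m (f x) (f y))"

definition automorphic_loop :: "('a \<Rightarrow> 'a \<Rightarrow> 'a) \<Rightarrow> 'a \<Rightarrow> bool" where
  "automorphic_loop m e \<longleftrightarrow> loop m e \<and> (\<forall>f \<in> Inn m e. is_aut m f)"

text \<open>Inverse x^{-1} (taken as the right inverse; two-sided in automorphic loops).\<close>
definition loop_inv :: "('a \<Rightarrow> 'a \<Rightarrow> 'a) \<Rightarrow> 'a \<Rightarrow> 'a \<Rightarrow> 'a" where
  "loop_inv m e x = (THE y. m x y = e)"

primrec npow :: "('a \<Rightarrow> 'a \<Rightarrow> 'a) \<Rightarrow> 'a \<Rightarrow> 'a \<Rightarrow> nat \<Rightarrow> 'a" where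
  "npow m e a 0 = e"
| "npow m e a (Suc n) = m (npow m e a n) a"

definition ipow :: "('a \<Rightarrow> 'a \<Rightarrow> 'a) \<Rightarrow> 'a \<Rightarrow> 'a \<Rightarrow> int \<Rightarrow> 'a" where
  "ipow m e a n = (if 0 \<le> n then npow m e a (nat n) else npow m e (loop_inv m e a) (nat (- n)))"

text \<open>P_x = R_x^{-1} L_{x^{-1}} (maps act on the right, composed left to right),
  i.e. as a function: apply R_x^{-1} first, then L_{x^{-1}}.\<close>
definition Pmap :: "('a \<Rightarrow> 'a \<Rightarrow> 'a) \<Rightarrow> 'a \<Rightarrow> 'a \<Rightarrow> 'a \<Rightarrow> 'a" where
  "Pmap m e x = Lt m (loop_inv m e x) \<circ> inv (Rt m x)"

definition fpow :: "('a \<Rightarrow> 'a) \<Rightarrow> int \<Rightarrow> 'a \<Rightarrow> 'a" where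
  "fpow f n = (if 0 \<le> n then f ^^ nat n else inv f ^^ nat (- n))"

end

theory Submission
  imports Defs
begin

locale ALx =
  fixes m ld rd :: "'a \<Rightarrow> 'a \<Rightarrow> 'a" and i :: "'a \<Rightarrow> 'a" and e :: 'a
  assumes l1: "ld a (m a x) = x" and l2: "m a (ld a b) = b"
    and r1: "rd (m y a) a = y" and r2: "m (rd b a) a = b"
    and el: "m e x = x" and er: "m x e = x" and inv: "m x (i x) = e"
    and t: "ld x (m (m z w) x) = m (ld x (m z x)) (ld x (m w x))"
    and r: "rd (m (m (m z w) x) y) (m x y) = m (rd (m (m z x) y) (m x y)) (rd (m (m w x) y) (m x y))"
    and l: "ld (m y x) (m y (m x (m z w))) = m (ld (m y x) (m y (m x z))) (ld (m y x) (m y (m x w)))"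
begin
lemma f1: "(ld x0 (m x0 x1)) = x1" by (metis l1)
lemma f2: "(m x0 (ld x0 x2)) = x2" by (metis l2)
lemma f3: "(rd (m x3 x0) x0) = x3" by (metis r1)
lemma f4: "(m (rd x2 x0) x0) = x2" by (metis r2)
lemma f5: "(m e x1) = x1" by (metis el)
lemma f6: "(m x1 e) = x1" by (metis er)
lemma f7: "e = (m x1 (i x1))" by (metis inv)
lemma f8: "(ld x1 (m (m x4 x5) x1)) = (m (ld x1 (m x4 x1)) (ld x1 (m x5 x1)))" by (metis t)
lemma f9: "(rd (m (m (m x4 x5) x1) x3) (m x1 x3)) = (m (rd (m (m x4 x1) x3) (m x1 x3)) (rd (m (m x5 x1) x3) (m x1 x3)))" by (metis r)
lemma f10: "(ld (m x3 x1) (m x3 (m x1 (m x4 x5)))) = (m (ld (m x3 x1) (m x3 (m x1 x4))) (ld (m x3 x1) (m x3 (m x1 x5))))" by (metis l)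
lemma f16: "(ld e x0) = x0" by (metis f1 f5)
lemma f17: "e = (ld x1 x1)" by (metis f1 f6)
lemma f18: "(i x2) = (ld x2 e)" by (metis f1 f7)
lemma f32: "(rd x1 e) = x1" by (metis f3 f6)
lemma f33: "(rd e (i x2)) = x2" by (metis f3 f7)
lemma f34: "(rd x4 (ld x3 x4)) = x3" by (metis f3 f2)
lemma f37: "(ld (rd x2 x3) x2) = x3" by (metis f1 f4)
lemma f53: "(ld x12 (m (m (rd x11 x12) x13) x12)) = (m (ld x12 x11) (ld x12 (m x13 x12)))" by (metis f8 f4)
lemma f55: "(ld x0 (m (m x0 x1) x0)) = (m x0 (ld x0 (m x1 x0)))" by (metis f8 f1)
lemma f58: "(ld (i x2) (m (m x3 x2) (i x2))) = (m (ld (i x2) (m x3 (i x2))) (ld (i x2) e))" by (metis f8 f7)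
lemma f61: "(ld x12 (m (m x13 (rd x11 x12)) x12)) = (m (ld x12 (m x13 x12)) (ld x12 x11))" by (metis f8 f4)
lemma f66: "(ld x3 (m x5 x3)) = (ld (ld x3 (m x4 x3)) (ld x3 (m (m x4 x5) x3)))" by (metis f1 f8)
lemma f74: "(ld x0 (m (m x0 x1) x0)) = (m x1 x0)" by (metis f55 f2)
lemma f83: "(ld (i x2) (m (m x3 x2) (i x2))) = (m (ld (i x2) (m x3 (i x2))) (i (i x2)))" by (metis f58 f18)
lemma f94: "(i (rd e x2)) = x2" by (metis f37 f18)
lemma f102: "(m (i x1) x1) = (ld x1 (m e x1))" by (metis f74 f7)
lemma f103: "(m (ld x2 x3) x2) = (ld x2 (m x3 x2))" by (metis f74 f2)
lemma f112: "(m (m x8 x9) x8) = (m x8 (m x9 x8))" by (metis f2 f74)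
lemma f115: "(ld x1 x1) = (m (i x1) x1)" by (metis f102 f5)
lemma f116: "e = (m (i x1) x1)" by (metis f115 f17)
lemma f117: "(ld x1 (m (m x4 x5) x1)) = (m (m (ld x1 x4) x1) (ld x1 (m x5 x1)))" by (metis f8 f103)
lemma f119: "(ld x12 (m (m (rd x11 x12) x13) x12)) = (m (ld x12 x11) (m (ld x12 x13) x12))" by (metis f53 f103)
lemma f121: "(ld x12 (m (m x13 (rd x11 x12)) x12)) = (m (m (ld x12 x13) x12) (ld x12 x11))" by (metis f61 f103)
lemma f124: "(ld x3 (m x5 x3)) = (ld (m (ld x3 x4) x3) (ld x3 (m (m x4 x5) x3)))" by (metis f66 f103)
lemma f127: "(ld (i x2) (m (m x3 x2) (i x2))) = (m (m (ld (i x2) x3) (i x2)) (i (i x2)))" by (metis f83 f103)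
lemma f129: "(ld x1 (m (m x4 x5) x1)) = (m (m (ld x1 x4) x1) (m (ld x1 x5) x1))" by (metis f117 f103)
lemma f130: "(m (m (ld x1 x4) x1) (m (ld x1 x5) x1)) = (m (ld x1 (m x4 x5)) x1)" by (metis f129 f103)
lemma f141: "(ld x3 (m x5 x3)) = (ld (m (ld x3 x4) x3) (m (ld x3 (m x4 x5)) x3))" by (metis f124 f103)
lemma f142: "(ld (m (ld x3 x4) x3) (m (ld x3 (m x4 x5)) x3)) = (m (ld x3 x5) x3)" by (metis f141 f103)
lemma f145: "(m (m (ld (i x2) x3) (i x2)) (i (i x2))) = (m (ld (i x2) (m x3 x2)) (i x2))" by (metis f127 f103)
lemma f161: "(m (ld x3 (m x3 x4)) x3) = (m (m e x3) (m (ld x3 x4) x3))" by (metis f130 f17)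
lemma f174: "(m (ld x3 (m x3 x4)) x3) = (m x3 (m (ld x3 x4) x3))" by (metis f161 f5)
lemma f175: "(m x4 x3) = (m x3 (m (ld x3 x4) x3))" by (metis f174 f1)
lemma f200: "(i x0) = (rd e x0)" by (metis f3 f116)
lemma f204: "(i (i x2)) = x2" by (metis f94 f200)
lemma f206: "(m (ld (i x2) (m x3 x2)) (i x2)) = (m (m (ld (i x2) x3) (i x2)) x2)" by (metis f145 f204)
lemma f227: "(rd (m (m (m (rd x15 x16) x17) x16) x18) (m x16 x18)) = (m (rd (m x15 x18) (m x16 x18)) (rd (m (m x17 x16) x18) (m x16 x18)))" by (metis f9 f4)
lemma f248: "(rd (m (m (m x4 x5) x3) (i x3)) e) = (m (rd (m (m x4 x3) (i x3)) e) (rd (m (m x5 x3) (i x3)) e))" by (metis f9 f7)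
lemma f294: "(rd (m (m (m x4 x5) x3) (i x3)) e) = (m (rd (m (m x4 x3) (i x3)) e) (m (m x5 x3) (i x3)))" by (metis f248 f32)
lemma f295: "(rd (m (m (m x4 x5) x3) (i x3)) e) = (m (m (m x4 x3) (i x3)) (m (m x5 x3) (i x3)))" by (metis f294 f32)
lemma f296: "(m (m (m x4 x5) x3) (i x3)) = (m (m (m x4 x3) (i x3)) (m (m x5 x3) (i x3)))" by (metis f295 f32)
lemma f318: "(ld (i x1) e) = (m (ld (i x1) x1) (i x1))" by (metis f103 f7)
lemma f321: "(m (ld x8 (rd x7 x8)) x8) = (ld x8 x7)" by (metis f103 f4)
lemma f324: "(m (ld x14 (i x14)) x14) = (ld x14 e)" by (metis f103 f116)
lemma f333: "(i (i x1)) = (m (ld (i x1) x1) (i x1))" by (metis f318 f18)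
lemma f334: "(m (ld (i x1) x1) (i x1)) = x1" by (metis f333 f204)
lemma f337: "(i x14) = (m (ld x14 (i x14)) x14)" by (metis f324 f18)
lemma f354: "(ld (m x4 x3) (m x4 (m x3 (m (i x3) x5)))) = (m (ld (m x4 x3) (m x4 e)) (ld (m x4 x3) (m x4 (m x3 x5))))" by (metis f10 f7)
lemma f401: "(ld (m x4 x3) (m x4 (m x3 (m (i x3) x5)))) = (m (ld (m x4 x3) x4) (ld (m x4 x3) (m x4 (m x3 x5))))" by (metis f354 f6)
lemma f573: "(ld (m x7 x8) (m x7 (m x8 x7))) = x7" by (metis f1 f112)
lemma f574: "(m x9 x10) = (rd (m x9 (m x10 x9)) x9)" by (metis f3 f112)
lemma f618: "(m (ld x9 x8) (m (ld x9 (i (rd x8 x9))) x9)) = (ld x9 (m e x9))" by (metis f119 f7)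
lemma f656: "(m (ld x9 x8) (m (ld x9 (i (rd x8 x9))) x9)) = (m (ld x9 e) x9)" by (metis f618 f103)
lemma f657: "(m (ld x9 x8) (m (ld x9 (i (rd x8 x9))) x9)) = (m (i x9) x9)" by (metis f656 f18)
lemma f658: "e = (m (ld x9 x8) (m (ld x9 (i (rd x8 x9))) x9))" by (metis f657 f116)
lemma f937: "(m (ld (m x2 x2) x2) (m x2 x2)) = x2" by (metis f573 f103)
lemma f1321: "(m x14 x14) = (ld (ld (m x14 x14) x14) x14)" by (metis f1 f937)
lemma f1375: "(m (ld x9 (i x8)) x9) = (ld (m (ld x9 x8) x9) (m (ld x9 e) x9))" by (metis f142 f7)
lemma f1450: "(m (ld x9 (i x8)) x9) = (ld (m (ld x9 x8) x9) (m (i x9) x9))" by (metis f1375 f18)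
lemma f1451: "(m (ld x9 (i x8)) x9) = (ld (m (ld x9 x8) x9) e)" by (metis f1450 f116)
lemma f2299: "(m x0 x0) = (m (ld (i x0) (m x0 x0)) (i x0))" by (metis f206 f334)
lemma f2393: "(m (m x9 x9) (i x9)) = (m (i x9) (m x9 x9))" by (metis f175 f2299)
lemma f2413: "(i x47) = (ld (m (i x47) (ld (i x47) (m x47 x47))) (m (i x47) (m x47 x47)))" by (metis f573 f2299)
lemma f2429: "(i x47) = (ld (m x47 x47) (m (i x47) (m x47 x47)))" by (metis f2413 f2)
lemma f2524: "(m (i x40) (m x40 x40)) = (rd (m (i x40) (m (i x40) (m x40 x40))) (i x40))" by (metis f574 f2393)
lemma f2613: "(m (m (m (m x22 x22) x23) (i x23)) (i (m (m x22 x23) (i x23)))) = (m (i (m (m x22 x23) (i x23))) (m (m (m x22 x22) x23) (i x23)))" by (metis f2393 f296)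
lemma f2618: "(m (m x34 x33) (i x33)) = (ld (m (m x32 x33) (i x33)) (m (m (m x32 x34) x33) (i x33)))" by (metis f1 f296)
lemma f2775: "(i (m (m x2 x3) (i x3))) = (ld (m (m (m x2 x2) x3) (i x3)) (m (i (m (m x2 x3) (i x3))) (m (m (m x2 x2) x3) (i x3))))" by (metis f2429 f296)
lemma f3506: "(m (ld x10 (i (rd x11 x10))) x10) = (ld (ld x10 x11) e)" by (metis f1 f658)
lemma f3609: "(m (ld x10 (i (rd x11 x10))) x10) = (i (ld x10 x11))" by (metis f3506 f18)
lemma f3696: "(m (ld x14 (i (m x14 x15))) x14) = (i (ld x14 (m x14 (m x15 x14))))" by (metis f3609 f574)
lemma f3712: "(m (i (rd x9 x8)) x8) = (m x8 (i (ld x8 x9)))" by (metis f175 f3609)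
lemma f3717: "(m (ld (i x22) (m (i (rd x23 (i x22))) x22)) (i x22)) = (m (i (ld (i x22) x23)) x22)" by (metis f206 f3609)
lemma f3719: "(ld x26 (i (rd x27 x26))) = (rd (i (ld x26 x27)) x26)" by (metis f3 f3609)
lemma f3737: "(ld (m x80 (ld x80 (i (rd x81 x80)))) (m x80 (i (ld x80 x81)))) = x80" by (metis f573 f3609)
lemma f3739: "(m x84 (ld x84 (i (rd x85 x84)))) = (rd (m x84 (i (ld x84 x85))) x84)" by (metis f574 f3609)
lemma f3821: "(m (ld x14 (i (m x14 x15))) x14) = (i (m x15 x14))" by (metis f3696 f1)
lemma f3858: "(ld (i (rd x81 x80)) (m x80 (i (ld x80 x81)))) = x80" by (metis f3737 f2)
lemma f3861: "(i (rd x85 x84)) = (rd (m x84 (i (ld x84 x85))) x84)" by (metis f3739 f2)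
lemma f3899: "(ld e (m (i x95) (m x95 (m (i x95) x96)))) = (m (ld e (i x95)) (ld e (m (i x95) (m x95 x96))))" by (metis f401 f116)
lemma f3901: "(ld (m x5 x3) (m x5 (m x3 (m (i x3) (ld x3 x4))))) = (m (ld (m x5 x3) x5) (ld (m x5 x3) (m x5 x4)))" by (metis f401 f2)
lemma f4007: "(ld e (m (i x95) (m x95 (m (i x95) x96)))) = (m (ld e (i x95)) (m (i x95) (m x95 x96)))" by (metis f3899 f16)
lemma f4008: "(ld e (m (i x95) (m x95 (m (i x95) x96)))) = (m (i x95) (m (i x95) (m x95 x96)))" by (metis f4007 f16)
lemma f4009: "(m (i x95) (m x95 (m (i x95) x96))) = (m (i x95) (m (i x95) (m x95 x96)))" by (metis f4008 f16)
lemma f4011: "(m (i x40) (m x40 x40)) = (rd (m (i x40) (m x40 (m (i x40) x40))) (i x40))" by (metis f2524 f4009)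
lemma f4016: "(m (i x40) (m x40 x40)) = (rd (m (i x40) (m x40 e)) (i x40))" by (metis f4011 f116)
lemma f4017: "(m (i x40) (m x40 x40)) = (rd (m (i x40) x40) (i x40))" by (metis f4016 f6)
lemma f4018: "(m (i x40) (m x40 x40)) = (rd e (i x40))" by (metis f4017 f116)
lemma f4019: "(m (i x40) (m x40 x40)) = x40" by (metis f4018 f33)
lemma f4020: "(m (m x9 x9) (i x9)) = x9" by (metis f2393 f4019)
lemma f4021: "(i x47) = (ld (m x47 x47) x47)" by (metis f2429 f4019)
lemma f4046: "(ld (i x14) x14) = (m x14 x14)" by (metis f1321 f4021)
lemma f4400: "(m (m x2 x3) (i x3)) = (m (m (m (m x2 x2) x3) (i x3)) (i (m (m x2 x3) (i x3))))" by (metis f4020 f296)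
lemma f4439: "(m (m x22 x23) (i x23)) = (m (i (m (m x22 x23) (i x23))) (m (m (m x22 x22) x23) (i x23)))" by (metis f2613 f4400)
lemma f4441: "(i (m (m x2 x3) (i x3))) = (ld (m (m (m x2 x2) x3) (i x3)) (m (m x2 x3) (i x3)))" by (metis f2775 f4439)
lemma f4990: "(rd (m (m (m (rd x26 x25) x25) x25) (i x25)) (m x25 (i x25))) = (m (rd (m x26 (i x25)) (m x25 (i x25))) (rd x25 (m x25 (i x25))))" by (metis f227 f4020)
lemma f5100: "(rd (m (m (m (rd x26 x25) x25) x25) (i x25)) e) = (m (rd (m x26 (i x25)) e) (rd x25 e))" by (metis f4990 f7)
lemma f5101: "(rd (m (m (m (rd x26 x25) x25) x25) (i x25)) e) = (m (rd (m x26 (i x25)) e) x25)" by (metis f5100 f32)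
lemma f5102: "(rd (m (m (m (rd x26 x25) x25) x25) (i x25)) e) = (m (m x26 (i x25)) x25)" by (metis f5101 f32)
lemma f5103: "(m (m x26 (i x25)) x25) = (rd (m (m x26 x25) (i x25)) e)" by (metis f5102 f4)
lemma f5104: "(m (m x26 (i x25)) x25) = (m (m x26 x25) (i x25))" by (metis f5103 f32)
lemma f5111: "(m (ld (i x2) (m x3 x2)) (i x2)) = (m (m (ld (i x2) x3) x2) (i x2))" by (metis f206 f5104)
lemma f5457: "(ld (i x26) (m x27 x26)) = (rd (m (m (ld (i x26) x27) x26) (i x26)) (i x26))" by (metis f3 f5111)
lemma f5484: "(m (i x108) (ld (i x108) (m x109 x108))) = (rd (m (i x108) (m (m (ld (i x108) x109) x108) (i x108))) (i x108))" by (metis f574 f5111)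
lemma f5562: "(ld (i x26) (m x27 x26)) = (m (ld (i x26) x27) x26)" by (metis f5457 f3)
lemma f5608: "(m (i (ld (i x22) x23)) x22) = (m (m (ld (i x22) (i (rd x23 (i x22)))) x22) (i x22))" by (metis f3717 f5562)
lemma f5740: "(m (i x108) (ld (i x108) (m x109 x108))) = (m (i x108) (m (ld (i x108) x109) x108))" by (metis f5484 f574)
lemma f5741: "(m x109 x108) = (m (i x108) (m (ld (i x108) x109) x108))" by (metis f5740 f2)
lemma f6713: "(ld x1 (m x2 (i x1))) = (m (ld x1 x2) (i x1))" by (metis f5562 f204)
lemma f6739: "(m (ld (i x54) (rd x53 x54)) x54) = (ld (i x54) x53)" by (metis f5562 f4)
lemma f6842: "(m (ld x16 (ld (i x16) (rd x17 (i x16)))) (i x16)) = (ld x16 (ld (i x16) x17))" by (metis f6713 f321)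
lemma f6845: "(m (ld x22 (rd x21 (i x22))) (i x22)) = (ld x22 x21)" by (metis f6713 f4)
lemma f6855: "(m x8 (i x7)) = (m x7 (m (ld x7 x8) (i x7)))" by (metis f2 f6713)
lemma f6863: "(m (m x30 (i x29)) x29) = (m x29 (m (m (ld x29 x30) (i x29)) x29))" by (metis f175 f6713)
lemma f6931: "(m (m x30 (i x29)) x29) = (m x29 (m (m (ld x29 x30) x29) (i x29)))" by (metis f6863 f5104)
lemma f6932: "(m x29 (m (m (ld x29 x30) x29) (i x29))) = (m (m x30 x29) (i x29))" by (metis f6931 f5104)
lemma f6965: "(ld (i x2) (rd x3 x2)) = (rd (ld (i x2) x3) x2)" by (metis f3 f6739)
lemma f8331: "(ld x26 (i (m x26 x27))) = (rd (i (m x27 x26)) x26)" by (metis f3 f3821)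
lemma f8364: "(ld (m x136 (ld x136 (i (m x136 x137)))) (m x136 (i (m x137 x136)))) = x136" by (metis f573 f3821)
lemma f8366: "(m x140 (ld x140 (i (m x140 x141)))) = (rd (m x140 (i (m x141 x140))) x140)" by (metis f574 f3821)
lemma f8467: "(ld (i (m x136 x137)) (m x136 (i (m x137 x136)))) = x136" by (metis f8364 f2)
lemma f8470: "(i (m x140 x141)) = (rd (m x140 (i (m x141 x140))) x140)" by (metis f8366 f2)
lemma f9118: "(m (m (i x8) x9) x8) = (m (i x8) (m x9 x8))" by (metis f5741 f1)
lemma f9573: "(ld x4 (rd x5 (i x4))) = (rd (ld x4 x5) (i x4))" by (metis f3 f6845)
lemma f9654: "(m x0 (m x1 (i x0))) = (m (m x0 x1) (i x0))" by (metis f6855 f1)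
lemma f9734: "(ld (m x154 (i x153)) (m x153 (m (m (ld x153 x154) (i x153)) x153))) = x153" by (metis f573 f6855)
lemma f9815: "(ld (m x154 (i x153)) (m x153 (m (m (ld x153 x154) x153) (i x153)))) = x153" by (metis f9734 f5104)
lemma f9816: "(ld (m x154 (i x153)) (m (m x154 x153) (i x153))) = x153" by (metis f9815 f6932)
lemma f10419: "(m x24 (i (ld x24 (ld (i x24) x25)))) = (m (i (ld (i x24) (rd x25 x24))) x24)" by (metis f3712 f6965)
lemma f13258: "(m (m (ld x33 (i x33)) x33) (ld x33 x34)) = (ld x33 (m (i x33) (m (rd x34 x33) x33)))" by (metis f121 f9118)
lemma f13377: "(m (m (ld x33 (i x33)) x33) (ld x33 x34)) = (ld x33 (m (i x33) x34))" by (metis f13258 f4)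
lemma f13378: "(ld x33 (m (i x33) x34)) = (m (i x33) (ld x33 x34))" by (metis f13377 f337)
lemma f13592: "(rd x1 (i x0)) = (ld x0 (rd (m x0 x1) (i x0)))" by (metis f9573 f1)
lemma f13644: "(i (ld (i x31) (ld x31 x32))) = (m (ld (i x31) (i (ld x31 (rd x32 (i x31))))) (i x31))" by (metis f3609 f9573)
lemma f14194: "(m (m (ld (i x39) x39) (i x39)) (ld (i x39) x40)) = (ld (i x39) (m x39 (m (rd x40 (i x39)) (i x39))))" by (metis f121 f9654)
lemma f14199: "(i x51) = (ld (m x51 x52) (m x51 (m x52 (i x51))))" by (metis f1 f9654)
lemma f14200: "(m x53 x54) = (rd (m x53 (m x54 (i x53))) (i x53))" by (metis f3 f9654)
lemma f14264: "(i (m (i x259) (m x259 x260))) = (rd (m (i x259) (i (m x259 (m x260 (i x259))))) (i x259))" by (metis f8470 f9654)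
lemma f14346: "(m (m (ld (i x39) x39) (i x39)) (ld (i x39) x40)) = (ld (i x39) (m x39 x40))" by (metis f14194 f4)
lemma f14347: "(ld (i x39) (m x39 x40)) = (m (m (m x39 x39) (i x39)) (ld (i x39) x40))" by (metis f14346 f4046)
lemma f14348: "(ld (i x39) (m x39 x40)) = (m (m x39 (m x39 (i x39))) (ld (i x39) x40))" by (metis f14347 f9654)
lemma f14349: "(ld (i x39) (m x39 x40)) = (m (m x39 e) (ld (i x39) x40))" by (metis f14348 f7)
lemma f14350: "(ld (i x39) (m x39 x40)) = (m x39 (ld (i x39) x40))" by (metis f14349 f6)
lemma f14544: "(m x6 (i x7)) = (rd (m (m x6 x7) (i x7)) x7)" by (metis f34 f9816)
lemma f15218: "(m x31 x32) = (m (m (rd x31 (i x32)) x32) (i x32))" by (metis f5104 f4)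
lemma f15222: "(m (m (i (rd x36 (i x37))) x37) (i x37)) = (m (m (i x37) (i (ld (i x37) x36))) x37)" by (metis f5104 f3712)
lemma f15296: "(m x222 (m x221 (i x222))) = (rd (m x222 (m (m x221 x222) (i x222))) x222)" by (metis f574 f5104)
lemma f15308: "(i (m x246 (m x245 (i x246)))) = (rd (m x246 (i (m (m x245 x246) (i x246)))) x246)" by (metis f8470 f5104)
lemma f15372: "(m (m (i (rd x36 (i x37))) x37) (i x37)) = (m (i x37) (m (i (ld (i x37) x36)) x37))" by (metis f15222 f9118)
lemma f16548: "(ld x14 x15) = (m (i x14) (ld x14 (ld (i x14) x15)))" by (metis f13378 f2)
lemma f16562: "(m (i x14) x15) = (m x14 (m (i x14) (ld x14 x15)))" by (metis f2 f13378)
lemma f16637: "(m (ld (m x5 x3) x5) (ld (m x5 x3) (m x5 x4))) = (ld (m x5 x3) (m x5 (m (i x3) x4)))" by (metis f3901 f16562)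
lemma f17198: "(rd (m x4 x5) (i x4)) = (m x4 (rd x5 (i x4)))" by (metis f2 f13592)
lemma f17433: "(i x38) = (ld (m x38 (i (rd x37 (i x38)))) (m x38 (m (i x38) (i (ld (i x38) x37)))))" by (metis f14199 f3712)
lemma f17612: "(m x5 (m (i x5) x6)) = (rd (m x5 (m (i x5) (m x6 (i x5)))) (i x5))" by (metis f14200 f112)
lemma f17623: "(m x26 (ld (i x26) (i (rd x27 (i x26))))) = (rd (m x26 (i (ld (i x26) x27))) (i x26))" by (metis f14200 f3609)
lemma f18192: "(i x26) = (rd (m x26 x27) (m x26 (ld (i x26) x27)))" by (metis f34 f14350)
lemma f18667: "(ld (i x35) (m (m x34 x35) (i x35))) = (m (ld (i x35) (m x34 (i x35))) x35)" by (metis f6739 f14544)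
lemma f18795: "(ld (i x35) (m (m x34 x35) (i x35))) = (m (m (ld (i x35) x34) (i x35)) x35)" by (metis f18667 f103)
lemma f18796: "(ld (i x35) (m (m x34 x35) (i x35))) = (m (m (ld (i x35) x34) x35) (i x35))" by (metis f18795 f5104)
lemma f20427: "(ld x28 (ld (i x28) x29)) = (ld (i x28) (ld x28 x29))" by (metis f1 f16548)
lemma f20558: "(m (ld (i x31) (i (ld x31 (rd x32 (i x31))))) (i x31)) = (i (ld x31 (ld (i x31) x32)))" by (metis f13644 f20427)
lemma f21068: "(m x1 (m (i x1) x2)) = (m (i x1) (m x1 x2))" by (metis f16562 f1)
lemma f21267: "(rd (m (i x259) (i (m x259 (m x260 (i x259))))) (i x259)) = (i (m x259 (m (i x259) x260)))" by (metis f14264 f21068)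
lemma f21806: "(m x16 x17) = (m (m x16 (rd x17 (i x16))) (i x16))" by (metis f4 f17198)
lemma f23067: "(i x13) = (rd (m x13 (m (i x13) x14)) (m x13 x14))" by (metis f18192 f1)
lemma f26968: "(i (rd (ld x85 x86) (i x85))) = (rd (m (i x85) (i (ld x85 (ld (i x85) x86)))) (i x85))" by (metis f3861 f20427)
lemma f27062: "(rd (m (i x85) (i (ld x85 (ld (i x85) x86)))) (i x85)) = (i (ld x85 (rd x86 (i x85))))" by (metis f26968 f9573)
lemma f27416: "(m x76 x77) = (ld (i x76) (m x76 (m (i x76) x77)))" by (metis f1 f21068)
lemma f27491: "(ld (m x328 x329) (i (m (m x328 x329) (i x328)))) = (rd (i (m x328 (m (i x328) x329))) (m x328 x329))" by (metis f8331 f21068)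
lemma f27738: "(rd (i (m x328 (m (i x328) x329))) (m x328 x329)) = (ld (m x328 x329) (i (m x328 (m x329 (i x328)))))" by (metis f27491 f9654)
lemma f28344: "(m x16 (m (i x16) (i (ld (i x16) x17)))) = (m (m x16 (i (rd x17 (i x16)))) (i x16))" by (metis f21806 f3861)
lemma f28358: "(m x39 (i (ld (i x39) x40))) = (m (m x39 (ld (i x39) (i (rd x40 (i x39))))) (i x39))" by (metis f21806 f3719)
lemma f31386: "(m (ld (i x80) (i (ld x80 x81))) (i x80)) = (ld (m (ld x80 (ld (i x80) x81)) (i x80)) e)" by (metis f1451 f20427)
lemma f80266: "(ld (m (m (m x131 x131) x132) (i x132)) (m (m x131 x132) (i x132))) = (m (m (i x131) x132) (i x132))" by (metis f2618 f4020)
lemma f80698: "(i (m (m x2 x3) (i x3))) = (m (m (i x2) x3) (i x3))" by (metis f4441 f80266)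
lemma f80717: "(i (m x246 (m x245 (i x246)))) = (rd (m x246 (m (m (i x245) x246) (i x246))) x246)" by (metis f15308 f80698)
lemma f80726: "(i (m x246 (m x245 (i x246)))) = (m x246 (m (i x245) (i x246)))" by (metis f80717 f15296)
lemma f80734: "(i (m x259 (m (i x259) x260))) = (rd (m (i x259) (m x259 (m (i x260) (i x259)))) (i x259))" by (metis f21267 f80726)
lemma f80737: "(rd (i (m x328 (m (i x328) x329))) (m x328 x329)) = (ld (m x328 x329) (m x328 (m (i x329) (i x328))))" by (metis f27738 f80726)
lemma f80754: "(i (m x259 (m (i x259) x260))) = (rd (m x259 (m (i x259) (m (i x260) (i x259)))) (i x259))" by (metis f80734 f21068)
lemma f80755: "(i (m x259 (m (i x259) x260))) = (m x259 (m (i x259) (i x260)))" by (metis f80754 f17612)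
lemma f80810: "(ld (m x328 x329) (m x328 (m (i x329) (i x328)))) = (rd (m x328 (m (i x328) (i x329))) (m x328 x329))" by (metis f80737 f80755)
lemma f85363: "(m (m (i (rd x82 x83)) x83) (i x83)) = (i (m x82 (i x83)))" by (metis f80698 f4)
lemma f85380: "(i (m x2 x3)) = (m (m (i (rd x2 (i x3))) x3) (i x3))" by (metis f80698 f15218)
lemma f85526: "(i (m x82 (i x83))) = (m (m x83 (i (ld x83 x82))) (i x83))" by (metis f85363 f3712)
lemma f85566: "(i (m x36 x37)) = (m (i x37) (m (i (ld (i x37) x36)) x37))" by (metis f15372 f85380)
lemma f85755: "(i (m x9 (ld x9 x10))) = (m x9 (m (i x9) (i (ld x9 (ld (i x9) x10)))))" by (metis f80755 f16548)
lemma f85764: "(i (m x25 x26)) = (m x25 (m (i x25) (i (ld (i x25) x26))))" by (metis f80755 f2)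
lemma f85767: "(m x0 (m (i x0) (i (ld x0 x1)))) = (i (m (i x0) x1))" by (metis f80755 f16562)
lemma f85813: "(i x10) = (m x9 (m (i x9) (i (ld x9 (ld (i x9) x10)))))" by (metis f85755 f2)
lemma f85828: "(i (m x16 x17)) = (m (m x16 (i (rd x17 (i x16)))) (i x16))" by (metis f28344 f85764)
lemma f85830: "(i x38) = (ld (m x38 (i (rd x37 (i x38)))) (i (m x38 x37)))" by (metis f17433 f85764)
lemma f87845: "(m x38 (i (ld x38 x39))) = (rd (i (m x39 (i x38))) (i x38))" by (metis f3 f85526)
lemma f88162: "(m (i (ld (i x44) x45)) x44) = (ld (i x44) (i (m x45 x44)))" by (metis f1 f85566)
lemma f90455: "(i (m x105 x106)) = (ld (m (m x105 x106) (i (rd (i x105) (i (m x105 x106))))) (i (m x105 (m x106 (i x105)))))" by (metis f85830 f9654)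
lemma f90857: "(i (m x105 x106)) = (ld (m (m x105 x106) (i (rd (i x105) (i (m x105 x106))))) (m x105 (m (i x106) (i x105))))" by (metis f90455 f80726)
lemma f95937: "(i (m x13 (i (m x14 x13)))) = (m (m x13 x14) (m (i (m x13 x14)) (i (ld (m x13 x14) x13))))" by (metis f85813 f8467)
lemma f95938: "(i (m x16 (i (ld x16 x15)))) = (m (rd x15 x16) (m (i (rd x15 x16)) (i (ld (rd x15 x16) x16))))" by (metis f85813 f3858)
lemma f95960: "(m x18 (i (ld x18 (ld (i x18) x19)))) = (ld (i x18) (i x19))" by (metis f27416 f85813)
lemma f95977: "(ld x60 (i x61)) = (m (i x60) (i (ld x60 (ld (i x60) x61))))" by (metis f1 f85813)
lemma f96237: "(m (i (ld (i x24) (rd x25 x24))) x24) = (ld (i x24) (i x25))" by (metis f10419 f95960)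
lemma f96322: "(i (ld x85 (rd x86 (i x85)))) = (rd (ld x85 (i x86)) (i x85))" by (metis f27062 f95977)
lemma f96324: "(i (ld x85 (rd x86 (i x85)))) = (ld x85 (rd (i x86) (i x85)))" by (metis f96322 f9573)
lemma f96325: "(i (ld x31 (ld (i x31) x32))) = (m (ld (i x31) (ld x31 (rd (i x32) (i x31)))) (i x31))" by (metis f20558 f96324)
lemma f96345: "(i (ld x31 (ld (i x31) x32))) = (m (ld x31 (ld (i x31) (rd (i x32) (i x31)))) (i x31))" by (metis f96325 f20427)
lemma f96346: "(i (ld x31 (ld (i x31) x32))) = (ld x31 (ld (i x31) (i x32)))" by (metis f96345 f6842)
lemma f96906: "(i (ld (i x59) (rd x60 x59))) = (rd (ld (i x59) (i x60)) x59)" by (metis f3 f96237)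
lemma f97367: "(i (ld (i x59) (rd x60 x59))) = (ld (i x59) (rd (i x60) x59))" by (metis f96906 f6965)
lemma f97731: "(i (rd (rd x7 x6) (i x6))) = (rd (m (i x6) (ld (i x6) (rd (i x7) x6))) (i x6))" by (metis f3861 f97367)
lemma f97937: "(i (rd (rd x7 x6) (i x6))) = (rd (rd (i x7) x6) (i x6))" by (metis f97731 f2)
lemma f99333: "(ld (m x5 x6) (m x5 (m (i x6) (i x5)))) = (m (ld (m x5 x6) x5) (ld (m x5 x6) e))" by (metis f16637 f7)
lemma f99375: "(ld (m x5 x6) (m x5 (m (i x6) (i x5)))) = (m (ld (m x5 x6) x5) (i (m x5 x6)))" by (metis f99333 f18)
lemma f99377: "(rd (m x328 (m (i x328) (i x329))) (m x328 x329)) = (m (ld (m x328 x329) x328) (i (m x328 x329)))" by (metis f80810 f99375)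
lemma f103357: "(rd (rd (i (m x31 (m (i x31) x32))) (m x31 x32)) (i (m x31 x32))) = (i (rd (i x31) (i (m x31 x32))))" by (metis f97937 f23067)
lemma f103484: "(i (rd (i x31) (i (m x31 x32)))) = (rd (rd (m x31 (m (i x31) (i x32))) (m x31 x32)) (i (m x31 x32)))" by (metis f103357 f80755)
lemma f103485: "(i (rd (i x31) (i (m x31 x32)))) = (rd (m (ld (m x31 x32) x31) (i (m x31 x32))) (i (m x31 x32)))" by (metis f103484 f99377)
lemma f103486: "(ld (m x31 x32) x31) = (i (rd (i x31) (i (m x31 x32))))" by (metis f103485 f3)
lemma f103488: "(i (m x105 x106)) = (ld (m (m x105 x106) (ld (m x105 x106) x105)) (m x105 (m (i x106) (i x105))))" by (metis f90857 f103486)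
lemma f103490: "(i (m x105 x106)) = (ld x105 (m x105 (m (i x106) (i x105))))" by (metis f103488 f2)
lemma f103751: "(i (m x55 (i x54))) = (ld x55 (m x55 (m x54 (i x55))))" by (metis f103490 f204)
lemma f103755: "(ld (i x5) (m (i x5) (m (i x6) x5))) = (i (m (i x5) x6))" by (metis f103490 f204)
lemma f103878: "(m x54 (i x55)) = (i (m x55 (i x54)))" by (metis f103751 f1)
lemma f103909: "(m x38 (i (ld x38 x39))) = (rd (m x38 (i x39)) (i x38))" by (metis f87845 f103878)
lemma f103969: "(m (m x14 x13) (i x13)) = (m (m x13 x14) (m (i (m x13 x14)) (i (ld (m x13 x14) x13))))" by (metis f95937 f103878)
lemma f103989: "(m (ld x16 x15) (i x16)) = (m (rd x15 x16) (m (i (rd x15 x16)) (i (ld (rd x15 x16) x16))))" by (metis f95938 f103878)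
lemma f104100: "(m x26 (ld (i x26) (i (rd x27 (i x26))))) = (m x26 (i (ld x26 (ld (i x26) x27))))" by (metis f17623 f103909)
lemma f104102: "(m x26 (ld (i x26) (i (rd x27 (i x26))))) = (m x26 (ld x26 (ld (i x26) (i x27))))" by (metis f104100 f96346)
lemma f104103: "(m x26 (ld (i x26) (i (rd x27 (i x26))))) = (ld (i x26) (i x27))" by (metis f104102 f2)
lemma f104104: "(m x39 (i (ld (i x39) x40))) = (m (ld (i x39) (i x40)) (i x39))" by (metis f28358 f104103)
lemma f104106: "(ld (m (ld x80 (ld (i x80) x81)) (i x80)) e) = (m x80 (i (ld (i x80) (ld x80 x81))))" by (metis f31386 f104104)
lemma f104110: "(ld (m (ld x80 (ld (i x80) x81)) (i x80)) e) = (m x80 (i (ld x80 (ld (i x80) x81))))" by (metis f104106 f20427)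
lemma f104111: "(ld (m (ld x80 (ld (i x80) x81)) (i x80)) e) = (m x80 (ld x80 (ld (i x80) (i x81))))" by (metis f104110 f96346)
lemma f104112: "(ld (m (ld x80 (ld (i x80) x81)) (i x80)) e) = (ld (i x80) (i x81))" by (metis f104111 f2)
lemma f104542: "(m (i x6) x5) = (i (m (i x5) x6))" by (metis f103755 f1)
lemma f104547: "(m (i x1) x0) = (m x0 (m (i x0) (i (ld x0 x1))))" by (metis f85767 f104542)
lemma f104655: "(m (m x14 x13) (i x13)) = (m (i x13) (m x13 x14))" by (metis f103969 f104547)
lemma f104656: "(m (ld x16 x15) (i x16)) = (m (i x16) (rd x15 x16))" by (metis f103989 f104547)
lemma f104657: "(m (m x14 x13) (i x13)) = (m x13 (m (i x13) x14))" by (metis f104655 f21068)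
lemma f104706: "(m (m (ld (i x35) x34) x35) (i x35)) = (ld (i x35) (m x35 (m (i x35) x34)))" by (metis f18796 f104657)
lemma f105124: "(m (m (ld (i x35) x34) x35) (i x35)) = (m x35 (ld (i x35) (m (i x35) x34)))" by (metis f104706 f14350)
lemma f105125: "(m x35 x34) = (m (m (ld (i x35) x34) x35) (i x35))" by (metis f105124 f1)
lemma f105133: "(m (i (ld (i x22) x23)) x22) = (m x22 (i (rd x23 (i x22))))" by (metis f5608 f105125)
lemma f105375: "(ld (i x44) (i (m x45 x44))) = (m x44 (i (rd x45 (i x44))))" by (metis f88162 f105133)
lemma f105893: "(ld (i x80) (i x81)) = (ld (m (i x80) (rd (ld (i x80) x81) x80)) e)" by (metis f104112 f104656)
lemma f105979: "(ld (i x80) (i x81)) = (ld (m (i x80) (ld (i x80) (rd x81 x80))) e)" by (metis f105893 f6965)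
lemma f105980: "(ld (i x80) (i x81)) = (ld (rd x81 x80) e)" by (metis f105979 f2)
lemma f105981: "(i (rd x81 x80)) = (ld (i x80) (i x81))" by (metis f105980 f18)
lemma f106029: "(m x44 (i (rd x45 (i x44)))) = (i (rd (m x45 x44) x44))" by (metis f105375 f105981)
lemma f106186: "(i x45) = (m x44 (i (rd x45 (i x44))))" by (metis f106029 f3)
lemma f106187: "(i (m x16 x17)) = (m (i x17) (i x16))" by (metis f85828 f106186)

end

locale ctx =
  fixes m :: "'a \<Rightarrow> 'a \<Rightarrow> 'a" and e :: 'a
  assumes AL: "automorphic_loop m e"
begin

abbreviation ii where "ii \<equiv> loop_inv m e"
abbreviation ld where "ld a b \<equiv> inv (Lt m a) b"
abbreviation rd where "rd b a \<equiv> inv (Rt m a) b"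

lemma lp: "loop m e" using AL unfolding automorphic_loop_def by blast

lemma Lt_bij: "bij (Lt m a)"
proof -
  have u: "\<forall>b. \<exists>!x. m a x = b" using lp unfolding loop_def by blast
  have "inj (Lt m a)"
  proof (rule injI)
    fix x y assume "Lt m a x = Lt m a y"
    then have h: "m a x = m a y" by (simp add: Lt_def)
    have "\<exists>!z. m a z = m a y" using u by blast
    then show "x = y" using h by blast
  qed
  moreover have "surj (Lt m a)"
  proof (rule surjI)
    fix b
    have "\<exists>!z. m a z = b" using u by blast
    then have "m a (THE z. m a z = b) = b" by (rule theI')
    then show "Lt m a (THE z. m a z = b) = b" by (simp add: Lt_def)
  qed
  ultimately show ?thesis by (rule bijI)
qed

lemma Rt_bij: "bij (Rt m a)"
proof -
  have u: "\<forall>b. \<exists>!y. m y a = b" using lp unfolding loop_def by blast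
  have "inj (Rt m a)"
  proof (rule injI)
    fix x y assume "Rt m a x = Rt m a y"
    then have h: "m x a = m y a" by (simp add: Rt_def)
    have "\<exists>!z. m z a = m y a" using u by blast
    then show "x = y" using h by blast
  qed
  moreover have "surj (Rt m a)"
  proof (rule surjI)
    fix b
    have "\<exists>!z. m z a = b" using u by blast
    then have "m (THE z. m z a = b) a = b" by (rule theI')
    then show "Rt m a (THE z. m z a = b) = b" by (simp add: Rt_def)
  qed
  ultimately show ?thesis by (rule bijI)
qed

lemma c_l1: "ld a (m a x) = x"
  using inv_f_f[OF bij_is_inj[OF Lt_bij], of a x] by (simp add: Lt_def)
lemma c_l2: "m a (ld a b) = b"
  using surj_f_inv_f[OF bij_is_surj[OF Lt_bij], of a b] by (simp add: Lt_def)
lemma c_r1: "rd (m y a) a = y"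
  using inv_f_f[OF bij_is_inj[OF Rt_bij], of a y] by (simp add: Rt_def)
lemma c_r2: "m (rd b a) a = b"
  using surj_f_inv_f[OF bij_is_surj[OF Rt_bij], of a b] by (simp add: Rt_def)
lemma c_el: "m e x = x" using lp unfolding loop_def by blast
lemma c_er: "m x e = x" using lp unfolding loop_def by blast

lemma c_inv: "m x (ii x) = e"
proof -
  have "\<exists>!y. m x y = e" using lp unfolding loop_def by blast
  then show ?thesis unfolding loop_inv_def by (rule theI')
qed

lemma inv_unique: "m x y = e \<Longrightarrow> ii x = y"
proof -
  assume h: "m x y = e"
  have "\<exists>!y. m x y = e" using lp unfolding loop_def by blast
  then show ?thesis using h unfolding loop_inv_def by (rule the1_equality)
qed

lemma aut: "f \<in> Mlt m \<Longrightarrow> f e = e \<Longrightarrow> f (m x y) = m (f x) (f y)"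
  using AL unfolding automorphic_loop_def Inn_def is_aut_def by blast

lemma aut_inv: "f \<in> Mlt m \<Longrightarrow> f e = e \<Longrightarrow> f (ii x) = ii (f x)"
proof -
  assume a: "f \<in> Mlt m" "f e = e"
  have "m (f x) (f (ii x)) = e" using aut[OF a, of x "ii x"] c_inv a(2) by simp
  then show ?thesis using inv_unique by metis
qed

lemma Mlt_bij: "f \<in> Mlt m \<Longrightarrow> bij f"
proof (induction rule: Mlt.induct)
  case Mlt_id show ?case using bij_id unfolding id_def by simp
next
  case (Mlt_R f x) show ?case by (rule bij_comp[OF Mlt_R.IH Rt_bij])
next
  case (Mlt_Rinv f x) show ?case by (rule bij_comp[OF Mlt_Rinv.IH bij_imp_bij_inv[OF Rt_bij]])
next
  case (Mlt_L f x) show ?case by (rule bij_comp[OF Mlt_L.IH Lt_bij])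
next
  case (Mlt_Linv f x) show ?case by (rule bij_comp[OF Mlt_Linv.IH bij_imp_bij_inv[OF Lt_bij]])
qed

lemma ldxx: "ld x x = e" using c_l1[where a=x and x=e] c_er by simp
lemma rdxx: "rd x x = e" using c_r1[where y=e and a=x] c_el by simp

lemma ax_t: "ld x (m (m z w) x) = m (ld x (m z x)) (ld x (m w x))"
proof -
  let ?f = "inv (Lt m x) \<circ> (Rt m x \<circ> id)"
  have M: "?f \<in> Mlt m" by (intro Mlt.intros)
  have E: "?f e = e" using ldxx c_el by (simp add: Rt_def)
  show ?thesis using aut[OF M E, of z w] by (simp add: Rt_def)
qed

lemma ax_r: "rd (m (m (m z w) x) y) (m x y) = m (rd (m (m z x) y) (m x y)) (rd (m (m w x) y) (m x y))"
proof -
  let ?f = "inv (Rt m (m x y)) \<circ> (Rt m y \<circ> (Rt m x \<circ> id))"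
  have M: "?f \<in> Mlt m" by (intro Mlt.intros)
  have E: "?f e = e" using rdxx c_el by (simp add: Rt_def)
  show ?thesis using aut[OF M E, of z w] by (simp add: Rt_def)
qed

lemma ax_l: "ld (m y x) (m y (m x (m z w))) = m (ld (m y x) (m y (m x z))) (ld (m y x) (m y (m x w)))"
proof -
  let ?f = "inv (Lt m (m y x)) \<circ> (Lt m y \<circ> (Lt m x \<circ> id))"
  have M: "?f \<in> Mlt m" by (intro Mlt.intros)
  have E: "?f e = e" using ldxx c_er by (simp add: Lt_def)
  show ?thesis using aut[OF M E, of z w] by (simp add: Lt_def)
qed

lemma ALx_inst: "ALx m (\<lambda>a b. inv (Lt m a) b) (\<lambda>b a. inv (Rt m a) b) ii e"
  by (rule ALx.intro) (simp_all add: c_l1 c_l2 c_r1 c_r2 c_el c_er c_inv ax_t ax_r ax_l)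

lemma aaip: "ii (m x y) = m (ii y) (ii x)" using ALx.f106187[OF ALx_inst] .
lemma iii: "ii (ii x) = x" using ALx.f204[OF ALx_inst] .
lemma inv2: "m (ii x) x = e" using ALx.f116[OF ALx_inst] by simp

lemma Pm: "Pmap m e x z = m (ii x) (rd z x)"
  by (simp add: Pmap_def Lt_def)

lemma KL:
  assumes g: "g \<in> Mlt m"
  shows "ii \<circ> g \<circ> ii \<circ> inv g = Pmap m e (g e)"
proof
  fix z
  let ?x = "g e"
  let ?h = "inv (Rt m ?x) \<circ> g"
  have hM: "?h \<in> Mlt m" using g by (rule Mlt.intros)
  have he: "?h e = e" using rdxx by simp
  have gh: "\<And>w. g w = m (?h w) ?x" using c_r2 by simp
  have bg: "bij g" using Mlt_bij[OF g] .
  let ?w = "inv g z"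
  let ?v = "rd z ?x"
  have gw: "g ?w = z" by (rule surj_f_inv_f[OF bij_is_surj[OF bg]])
  have hw: "?h ?w = ?v" by (simp add: gw)
  have "g (ii ?w) = m (ii ?v) ?x" using gh[of "ii ?w"] aut_inv[OF hM he, of ?w] hw by simp
  then have "ii (g (ii ?w)) = m (ii ?x) ?v" using aaip iii by simp
  then show "(ii \<circ> g \<circ> ii \<circ> inv g) z = Pmap m e (g e) z" by (simp add: Pm)
qed

lemma ldi: "ii (ld (ii a) t) = rd (ii t) a"
proof -
  have "t = m (ii a) (ld (ii a) t)" using c_l2 by simp
  then have "ii t = m (ii (ld (ii a) t)) a" using aaip iii by metis
  then show ?thesis using c_r1 by metis
qed

lemma main1: "Pmap m e a \<circ> Pmap m e b \<circ> Pmap m e a = Pmap m e (Rt m a (inv (Lt m (ii a)) b))"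
proof -
  define u where "u = Rt m a \<circ> (inv (Lt m (ii a)) \<circ> (Rt m b \<circ> id))"
  have uM: "u \<in> Mlt m" unfolding u_def by (intro Mlt.intros)
  have ue: "u e = Rt m a (inv (Lt m (ii a)) b)" by (simp add: u_def Rt_def c_el)
  have bu: "bij u" using Mlt_bij[OF uM] .
  have uf: "\<And>w. u w = m (ld (ii a) (m w b)) a" by (simp add: u_def Rt_def)
  have iu: "\<And>z. inv u z = rd (Pmap m e a z) b"
  proof -
    fix z
    have "u (rd (Pmap m e a z) b) = z"
      using uf[of "rd (Pmap m e a z) b"] by (simp add: Pm c_r2 c_l1)
    then show "inv u z = rd (Pmap m e a z) b"
      by (rule inv_f_eq[OF bij_is_inj[OF bu]])
  qed
  have "Pmap m e a \<circ> Pmap m e b \<circ> Pmap m e a = ii \<circ> u \<circ> ii \<circ> inv u"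
  proof
    fix z
    let ?y = "Pmap m e a z"
    let ?s = "rd ?y b"
    have "(ii \<circ> u \<circ> ii \<circ> inv u) z = ii (u (ii ?s))" by (simp add: iu)
    also have "\<dots> = ii (m (ld (ii a) (m (ii ?s) b)) a)" by (simp only: uf)
    also have "\<dots> = m (ii a) (ii (ld (ii a) (m (ii ?s) b)))" using aaip by simp
    also have "\<dots> = m (ii a) (rd (m (ii b) ?s) a)" using ldi aaip iii by simp
    also have "\<dots> = (Pmap m e a \<circ> Pmap m e b \<circ> Pmap m e a) z" by (simp add: Pm)
    finally show "(Pmap m e a \<circ> Pmap m e b \<circ> Pmap m e a) z = (ii \<circ> u \<circ> ii \<circ> inv u) z" by simp
  qed
  also have "\<dots> = Pmap m e (u e)" using KL[OF uM] .
  finally show ?thesis using ue by simp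
qed

lemma inv_P: "inv (Pmap m e a) = Pmap m e (ii a)"
proof -
  let ?g = "Lt m (ii a) \<circ> id"
  have gM: "?g \<in> Mlt m" by (intro Mlt.intros)
  have bP: "bij (Pmap m e a)" unfolding Pmap_def
    by (intro bij_comp bij_imp_bij_inv Rt_bij Lt_bij)
  have bg: "bij ?g" using Mlt_bij[OF gM] .
  have ig: "\<And>z. inv ?g z = ld (ii a) z"
    by (simp add: fun.map_id)
  have "Pmap m e (ii a) = Pmap m e (?g e)" by (simp add: Lt_def c_er)
  also have "\<dots> = ii \<circ> ?g \<circ> ii \<circ> inv ?g" using KL[OF gM] by simp
  finally have P: "\<And>z. Pmap m e (ii a) z = m (ld (ii a) z) a"
    using aaip iii by (simp add: Lt_def)
  show ?thesis
  proof
    fix z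
    have "Pmap m e a (m (ld (ii a) z) a) = z" by (simp add: Pm c_r1 c_l2)
    then have "inv (Pmap m e a) z = m (ld (ii a) z) a" by (rule inv_f_eq[OF bij_is_inj[OF bP]])
    then show "inv (Pmap m e a) z = Pmap m e (ii a) z" using P by simp
  qed
qed

lemma fixpow: "h \<in> Mlt m \<Longrightarrow> h e = e \<Longrightarrow> h a = a \<Longrightarrow> h (npow m e a k) = npow m e a k"
  by (induction k) (simp_all add: aut)

lemma pw: "m (ii a) (m (npow m e a k) a) = npow m e a k"
proof -
  let ?T = "inv (Lt m a) \<circ> (Rt m a \<circ> id)"
  have TM: "?T \<in> Mlt m" by (intro Mlt.intros)
  have Te: "?T e = e" using ldxx c_el by (simp add: Rt_def)
  have Ta: "?T a = a" using c_l1 by (simp add: Rt_def)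
  have "ld a (m (npow m e a k) a) = npow m e a k" using fixpow[OF TM Te Ta, of k] by (simp add: Rt_def)
  then have comm: "m (npow m e a k) a = m a (npow m e a k)"
    using c_l2[where a=a and b="m (npow m e a k) a"] by simp
  let ?F = "Lt m (ii a) \<circ> (Lt m a \<circ> id)"
  have FM: "?F \<in> Mlt m" by (intro Mlt.intros)
  have Fe: "?F e = e" using inv2 c_er by (simp add: Lt_def)
  have Fa': "?F (ii a) = ii a" using c_inv c_er by (simp add: Lt_def)
  have Fa: "?F a = a" using aut_inv[OF FM Fe, of "ii a"] Fa' iii by simp
  have "m (ii a) (m a (npow m e a k)) = npow m e a k" using fixpow[OF FM Fe Fa, of k] by (simp add: Lt_def)
  then show ?thesis using comm by simp
qed

lemma iie: "ii e = e" using inv_unique[of e e] c_el by simp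

lemma Pe: "Pmap m e e = id"
proof
  fix z show "Pmap m e e z = id z" using iie c_el c_r1[where y=z and a=e] c_er by (simp add: Pm)
qed

lemma npos: "Pmap m e a ^^ k = Pmap m e (npow m e a k) \<and> Pmap m e a ^^ Suc k = Pmap m e (npow m e a (Suc k))"
proof (induction k)
  case 0
  then show ?case using Pe by (simp add: c_el)
next
  case (Suc k)
  have A: "Pmap m e a ^^ Suc k = Pmap m e (npow m e a (Suc k))" using Suc.IH by blast
  have "Pmap m e a ^^ Suc (Suc k) = Pmap m e a \<circ> Pmap m e a ^^ k \<circ> Pmap m e a"
    by (simp only: funpow.simps(2) funpow_Suc_right[symmetric] comp_assoc)
  also have "\<dots> = Pmap m e a \<circ> Pmap m e (npow m e a k) \<circ> Pmap m e a"
    by (simp only: conjunct1[OF Suc.IH])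
  also have "\<dots> = Pmap m e (Rt m a (ld (ii a) (npow m e a k)))" by (rule main1)
  also have "ld (ii a) (npow m e a k) = m (npow m e a k) a" using c_l1[where a="ii a" and x="m (npow m e a k) a"] pw[of a k] by simp
  finally have B: "Pmap m e a ^^ Suc (Suc k) = Pmap m e (npow m e a (Suc (Suc k)))"
    by (simp only: Rt_def npow.simps)
  show ?case using A B by blast
qed

lemma main2: "fpow (Pmap m e a) n = Pmap m e (ipow m e a n)"
proof (cases "0 \<le> n")
  case True
  then show ?thesis by (simp add: fpow_def ipow_def npos[THEN conjunct1])
next
  case False
  then show ?thesis by (simp add: fpow_def ipow_def inv_P npos[THEN conjunct1])
qed

end

theorem lemma2p3:
  fixes m :: "'a \<Rightarrow> 'a \<Rightarrow> 'a" and e :: 'a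
  assumes "automorphic_loop m e"
  shows "(\<forall>a b. Pmap m e a \<circ> Pmap m e b \<circ> Pmap m e a
                 = Pmap m e (Rt m a (inv (Lt m (loop_inv m e a)) b)))
       \<and> (\<forall>a (n::int). fpow (Pmap m e a) n = Pmap m e (ipow m e a n))"
proof -
  interpret C: ctx m e using assms by (rule ctx.intro)
  show ?thesis using C.main1 C.main2 by blast
qed

end
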